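(* $D_0$ is dense in $L_2^+(m)$. If in addition the semigroup is symmetric (each $T_t$ self-adjoint on $L_2(m)$), then $D_0$ is a dense subset of $L_1^+(m)$.
   Context: $(E,\mathcal B(E),m)$ is a $\sigma$-finite measure space. $p_t(x,\cdot)$, $t\ge0$, is a transition probability function on $E$ (probability measures, jointly measurable in $(t,x)$, $p_0(x,A)=1_A(x)$); $p_tf(x)=\int f\,dp_t(x,\cdot)$. $(T_t)$ is a strongly continuous semigroup on $L_2(m)$ such that for every bounded measurable $f$ with $\int f^2dm<\infty$, $p_tf$ is a representative of $T_tf$. $L_p^+(m)$ denotes the nonnegative elements of $L_p(m)$. $D=\{u\text{ bounded measurable},u\ge0,\int u\,dm<\infty\}$, and $D_0=\{\frac1t\int_0^tp_su\,ds: u\in D,\ t>0\}$. *)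

theory Defs
  imports "HOL-Probability.Probability"
begin

definition L2 :: "'a measure \<Rightarrow> ('a \<Rightarrow> real) \<Rightarrow> bool" where
  "L2 M f \<longleftrightarrow> f \<in> borel_measurable M \<and> integrable M (\<lambda>x. (f x)\<^sup>2)"

definition L1 :: "'a measure \<Rightarrow> ('a \<Rightarrow> real) \<Rightarrow> bool" where
  "L1 M f \<longleftrightarrow> f \<in> borel_measurable M \<and> integrable M f"

definition bdd_meas :: "'a measure \<Rightarrow> ('a \<Rightarrow> real) \<Rightarrow> bool" where
  "bdd_meas M f \<longleftrightarrow> f \<in> borel_measurable M \<and> (\<exists>B. \<forall>x\<in>space M. \<bar>f x\<bar> \<le> B)"

definition transition_prob :: "'a measure \<Rightarrow> (real \<Rightarrow> 'a \<Rightarrow> 'a measure) \<Rightarrow> bool" where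
  "transition_prob M p \<longleftrightarrow>
     (\<forall>t\<ge>0. \<forall>x\<in>space M. prob_space (p t x) \<and> sets (p t x) = sets M) \<and>
     (\<forall>A\<in>sets M. (\<lambda>(t, x). measure (p t x) A)
          \<in> borel_measurable (restrict_space borel {0..} \<Otimes>\<^sub>M M)) \<and>
     (\<forall>x\<in>space M. \<forall>A\<in>sets M. measure (p 0 x) A = indicator A x)"

definition ptf :: "(real \<Rightarrow> 'a \<Rightarrow> 'a measure) \<Rightarrow> real \<Rightarrow> ('a \<Rightarrow> real) \<Rightarrow> 'a \<Rightarrow> real" where
  "ptf p t f x = (\<integral>y. f y \<partial>(p t x))"

text \<open>Strongly continuous semigroup of bounded linear operators on L_2(m),
  given as operators on representatives that respect a.e. equality.\<close>
definition strongly_cont_semigroup_L2 ::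
  "'a measure \<Rightarrow> (real \<Rightarrow> ('a \<Rightarrow> real) \<Rightarrow> ('a \<Rightarrow> real)) \<Rightarrow> bool" where
  "strongly_cont_semigroup_L2 M T \<longleftrightarrow>
     (\<forall>t\<ge>0. \<forall>f. L2 M f \<longrightarrow> L2 M (T t f)) \<and>
     (\<forall>t\<ge>0. \<forall>f g. L2 M f \<longrightarrow> L2 M g \<longrightarrow> (AE x in M. f x = g x) \<longrightarrow>
        (AE x in M. T t f x = T t g x)) \<and>
     (\<forall>t\<ge>0. \<forall>f g a b. L2 M f \<longrightarrow> L2 M g \<longrightarrow>
        (AE x in M. T t (\<lambda>y. a * f y + b * g y) x = a * T t f x + b * T t g x)) \<and>
     (\<forall>t\<ge>0. \<exists>C. \<forall>f. L2 M f \<longrightarrow>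
        (\<integral>x. (T t f x)\<^sup>2 \<partial>M) \<le> C * (\<integral>x. (f x)\<^sup>2 \<partial>M)) \<and>
     (\<forall>f. L2 M f \<longrightarrow> (AE x in M. T 0 f x = f x)) \<and>
     (\<forall>s\<ge>0. \<forall>t\<ge>0. \<forall>f. L2 M f \<longrightarrow> (AE x in M. T (s + t) f x = T s (T t f) x)) \<and>
     (\<forall>f. L2 M f \<longrightarrow> ((\<lambda>t. \<integral>x. (T t f x - f x)\<^sup>2 \<partial>M) \<longlongrightarrow> 0) (at_right 0))"

definition symmetric_semigroup_L2 ::
  "'a measure \<Rightarrow> (real \<Rightarrow> ('a \<Rightarrow> real) \<Rightarrow> ('a \<Rightarrow> real)) \<Rightarrow> bool" where
  "symmetric_semigroup_L2 M T \<longleftrightarrow>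
     (\<forall>t\<ge>0. \<forall>f g. L2 M f \<longrightarrow> L2 M g \<longrightarrow>
        (\<integral>x. T t f x * g x \<partial>M) = (\<integral>x. f x * T t g x \<partial>M))"

definition Dset :: "'a measure \<Rightarrow> ('a \<Rightarrow> real) set" where
  "Dset M = {u. bdd_meas M u \<and> (\<forall>x\<in>space M. 0 \<le> u x) \<and> integrable M u}"

definition D0set :: "'a measure \<Rightarrow> (real \<Rightarrow> 'a \<Rightarrow> 'a measure) \<Rightarrow> ('a \<Rightarrow> real) set" where
  "D0set M p = {(\<lambda>x. (1 / t) * (\<integral>s\<in>{0..t}. ptf p s u x \<partial>lborel)) | u t. u \<in> Dset M \<and> 0 < t}"

end

theory Submission
  imports Defs
begin


locale setting = sigma_finite_measure M for M :: "'a measure" +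
  fixes p :: "real \<Rightarrow> 'a \<Rightarrow> 'a measure" and T :: "real \<Rightarrow> ('a \<Rightarrow> real) \<Rightarrow> ('a \<Rightarrow> real)"
  assumes tp: "transition_prob M p" and sg: "strongly_cont_semigroup_L2 M T"
  and rep: "\<And>t f. 0 \<le> t \<Longrightarrow> bdd_meas M f \<Longrightarrow> integrable M (\<lambda>x. (f x)\<^sup>2) \<Longrightarrow>
            AE x in M. ptf p t f x = T t f x"
begin

lemma kernel: "(\<lambda>(s,x). p s x) \<in> measurable (restrict_space borel {0..} \<Otimes>\<^sub>M M) (subprob_algebra M)"
proof (rule measurable_subprob_algebra)
  fix a :: "real \<times> 'a" assume a: "a \<in> space (restrict_space borel {0..} \<Otimes>\<^sub>M M)"
  then have "0 \<le> fst a" "snd a \<in> space M" by (auto simp: space_pair_measure space_restrict_space)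
  then have "prob_space (p (fst a) (snd a)) \<and> sets (p (fst a) (snd a)) = sets M"
    using tp unfolding transition_prob_def by auto
  then show "subprob_space (case a of (s, x) \<Rightarrow> p s x)" "sets (case a of (s, x) \<Rightarrow> p s x) = sets M"
    by (auto simp: case_prod_beta prob_space_imp_subprob_space)
next
  fix A assume A: "A \<in> sets M"
  have m: "(\<lambda>(t, x). measure (p t x) A) \<in> borel_measurable (restrict_space borel {0..} \<Otimes>\<^sub>M M)"
    using tp A unfolding transition_prob_def by auto
  show "(\<lambda>a. emeasure (case a of (s, x) \<Rightarrow> p s x) A) \<in> borel_measurable (restrict_space borel {0..} \<Otimes>\<^sub>M M)"
  proof (rule measurable_cong[THEN iffD1])
    show "(\<lambda>a. ennreal ((\<lambda>(t, x). measure (p t x) A) a)) \<in> borel_measurable (restrict_space borel {0..} \<Otimes>\<^sub>M M)"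
      using m by measurable
    fix a :: "real \<times> 'a" assume a: "a \<in> space (restrict_space borel {0..} \<Otimes>\<^sub>M M)"
    then have "0 \<le> fst a" "snd a \<in> space M" by (auto simp: space_pair_measure space_restrict_space)
    then have "prob_space (p (fst a) (snd a))"
      using tp unfolding transition_prob_def by auto
    then show "ennreal ((\<lambda>(t, x). measure (p t x) A) a) = emeasure (case a of (s, x) \<Rightarrow> p s x) A"
      by (auto simp: case_prod_beta prob_space.finite_measure finite_measure.emeasure_eq_measure)
  qed
qed

lemma P_meas:
  assumes "u \<in> borel_measurable M"
  shows "(\<lambda>(s,x). ptf p s u x) \<in> borel_measurable (restrict_space borel {0..} \<Otimes>\<^sub>M M)"
proof -
  have "(\<lambda>a. integral\<^sup>L ((\<lambda>(s,x). p s x) a) u) \<in> borel_measurable (restrict_space borel {0..} \<Otimes>\<^sub>M M)"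
    using measurable_compose[OF kernel integral_measurable_subprob_algebra[OF assms]] by simp
  then show ?thesis by (simp add: ptf_def case_prod_beta)
qed

lemma Q_meas:
  assumes "u \<in> borel_measurable M"
  shows "(\<lambda>(s,x). ptf p (max 0 s) u x) \<in> borel_measurable (lborel \<Otimes>\<^sub>M M)"
proof -
  have f: "(\<lambda>(s::real,x). (max 0 s, x)) \<in> measurable (lborel \<Otimes>\<^sub>M M) (restrict_space borel {0..} \<Otimes>\<^sub>M M)"
  proof (rule measurable_pair)
    show "fst \<circ> (\<lambda>(s::real, x). (max 0 s, x)) \<in> lborel \<Otimes>\<^sub>M M \<rightarrow>\<^sub>M restrict_space borel {0..}"
      apply (rule measurable_restrict_space2)
      by (simp_all add: comp_def case_prod_beta Pi_iff)
    show "snd \<circ> (\<lambda>(s::real, x). (max 0 s, x)) \<in> lborel \<Otimes>\<^sub>M M \<rightarrow>\<^sub>M M"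
      by (simp add: comp_def case_prod_beta)
  qed
  show ?thesis using measurable_compose[OF f P_meas[OF assms]] by (simp add: case_prod_beta)
qed

end



lemma si_bdd:
  fixes h :: "real \<Rightarrow> real"
  assumes "h \<in> borel_measurable lborel" "\<And>s. s \<in> {0..t} \<Longrightarrow> \<bar>h s\<bar> \<le> c"
  shows "integrable lborel (\<lambda>s. indicator {0..t} s * h s)"
proof -
  have "integrable lborel (\<lambda>s. indicator {0..t} s *\<^sub>R h s)"
    by (rule integrableI_bounded_set_indicator[where B=c]) (use assms in \<open>auto simp: emeasure_lborel_Icc_eq\<close>)
  then show ?thesis by simp
qed

lemma mean_sq:
  fixes h :: "real \<Rightarrow> real"
  assumes hm: "h \<in> borel_measurable lborel" and hb: "\<And>s. s \<in> {0..t} \<Longrightarrow> \<bar>h s\<bar> \<le> c" and t: "0 < t"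
  shows "((1/t) * (LINT s:{0..t}|lborel. h s))\<^sup>2 \<le> (1/t) * (LINT s:{0..t}|lborel. (h s)\<^sup>2)"
proof -
  define A where "A = (\<integral>s. indicator {0..t} s * h s \<partial>lborel)"
  define Q where "Q = (\<integral>s. indicator {0..t} s * (h s)\<^sup>2 \<partial>lborel)"
  define m where "m = A / t"
  have i1: "integrable lborel (\<lambda>s. indicator {0..t} s * h s)" by (rule si_bdd[OF hm hb])
  have i2: "integrable lborel (\<lambda>s. indicator {0..t} s * (h s)\<^sup>2)"
  proof (rule si_bdd[where c="c*c"])
    show "(\<lambda>s. (h s)\<^sup>2) \<in> borel_measurable lborel" using hm by measurable
    fix s assume "s \<in> {0..t}"
    then have "\<bar>h s\<bar> \<le> c" by (rule hb)
    then have "(h s)\<^sup>2 \<le> c * c"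
      by (metis abs_le_square_iff abs_of_nonneg abs_ge_zero order_trans power2_eq_square)
    then show "\<bar>(h s)\<^sup>2\<bar> \<le> c * c" by simp
  qed
  have i3: "integrable lborel (\<lambda>s. indicator {0..t::real} s :: real)"
    using si_bdd[of "\<lambda>_. 1" t 1] by simp
  have it: "(\<integral>s. indicator {0..t} s \<partial>lborel) = t" using t by simp
  have "0 \<le> (\<integral>s. indicator {0..t} s * (h s - m)\<^sup>2 \<partial>lborel)"
    by (rule Bochner_Integration.integral_nonneg) (auto simp: indicator_def)
  also have "(\<integral>s. indicator {0..t} s * (h s - m)\<^sup>2 \<partial>lborel) =
     (\<integral>s. indicator {0..t} s * (h s)\<^sup>2 - (2*m) * (indicator {0..t} s * h s) + m\<^sup>2 * indicator {0..t} s \<partial>lborel)"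
    by (rule Bochner_Integration.integral_cong[OF refl]) (simp add: power2_diff algebra_simps)
  also have "\<dots> = Q - (2*m) * A + m\<^sup>2 * t"
    using i1 i2 i3 it by (simp add: Q_def A_def)
  finally have "0 \<le> Q - 2*m*A + m\<^sup>2*t" by simp
  then have "A\<^sup>2 / t \<le> Q" using t by (simp add: m_def power2_eq_square field_simps)
  then have "((1/t) * A)\<^sup>2 \<le> (1/t) * Q" using t
    by (simp add: power2_eq_square field_simps)
  moreover have "(LINT s:{0..t}|lborel. h s) = A" "(LINT s:{0..t}|lborel. (h s)\<^sup>2) = Q"
    by (simp_all add: set_lebesgue_integral_def A_def Q_def)
  ultimately show ?thesis by simp
qed

lemma mean_abs:
  fixes h :: "real \<Rightarrow> real"
  assumes t: "0 < t"
  shows "\<bar>(1/t) * (LINT s:{0..t}|lborel. h s)\<bar> \<le> (1/t) * (LINT s:{0..t}|lborel. \<bar>h s\<bar>)"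
proof -
  have "\<bar>LINT s:{0..t}|lborel. h s\<bar> \<le> (LINT s:{0..t}|lborel. \<bar>h s\<bar>)"
    unfolding set_lebesgue_integral_def
    using integral_abs_bound[of lborel "\<lambda>s. indicator {0..t} s *\<^sub>R h s"]
    by (simp add: abs_mult)
  then show ?thesis using t by (simp add: abs_mult divide_right_mono)
qed




lemma (in sigma_finite_measure) avg_bound:
  fixes H :: "real \<Rightarrow> 'a \<Rightarrow> real"
  assumes Hm: "(\<lambda>(s,x). H s x) \<in> borel_measurable (lborel \<Otimes>\<^sub>M M)"
    and Hb: "\<And>s x. s \<in> {0..t} \<Longrightarrow> x \<in> space M \<Longrightarrow> 0 \<le> H s x \<and> H s x \<le> c"
    and t: "0 < t" and K0: "0 \<le> K"
    and K: "\<And>s. s \<in> {0<..t} \<Longrightarrow> (\<integral>\<^sup>+x. H s x \<partial>M) \<le> ennreal K"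
  shows "(\<integral>\<^sup>+x. ennreal ((1/t) * (LINT s:{0..t}|lborel. H s x)) \<partial>M) \<le> ennreal K"
proof -
  interpret L: pair_sigma_finite lborel M
    by (simp add: pair_sigma_finite.intro lborel.sigma_finite_measure_axioms sigma_finite_measure_axioms)
  have Fm: "(\<lambda>(s,x). ennreal (indicator {0..t} s * H s x)) \<in> borel_measurable (lborel \<Otimes>\<^sub>M M)"
    using Hm by measurable
  have pt: "ennreal ((1/t) * (LINT s:{0..t}|lborel. H s x)) =
     ennreal (1/t) * (\<integral>\<^sup>+s. ennreal (indicator {0..t} s * H s x) \<partial>lborel)" if x: "x \<in> space M" for x
  proof -
    have hm: "(\<lambda>s. H s x) \<in> borel_measurable lborel"
      using measurable_compose[OF measurable_Pair2'[OF x] Hm] by simp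
    have int: "integrable lborel (\<lambda>s. indicator {0..t} s * H s x)"
      by (rule si_bdd[OF hm, where c=c]) (use Hb x in force)
    have "(\<integral>\<^sup>+s. ennreal (indicator {0..t} s * H s x) \<partial>lborel) = ennreal (LINT s:{0..t}|lborel. H s x)"
      unfolding set_lebesgue_integral_def
      by (subst nn_integral_eq_integral[OF int]) (use Hb x in \<open>auto simp: indicator_def\<close>)
    moreover have "0 \<le> (LINT s:{0..t}|lborel. H s x)"
      unfolding set_lebesgue_integral_def
      by (rule Bochner_Integration.integral_nonneg) (use Hb x in \<open>auto simp: indicator_def\<close>)
    ultimately show ?thesis using t by (metis ennreal_mult' less_eq_real_def zero_le_divide_1_iff)
  qed
  have "(\<integral>\<^sup>+x. ennreal ((1/t) * (LINT s:{0..t}|lborel. H s x)) \<partial>M) =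
     (\<integral>\<^sup>+x. ennreal (1/t) * (\<integral>\<^sup>+s. ennreal (indicator {0..t} s * H s x) \<partial>lborel) \<partial>M)"
    by (rule nn_integral_cong) (rule pt)
  also have "\<dots> = ennreal (1/t) * (\<integral>\<^sup>+x. (\<integral>\<^sup>+s. ennreal (indicator {0..t} s * H s x) \<partial>lborel) \<partial>M)"
    by (rule nn_integral_cmult) (use Fm in measurable)
  also have "(\<integral>\<^sup>+x. (\<integral>\<^sup>+s. ennreal (indicator {0..t} s * H s x) \<partial>lborel) \<partial>M) =
      (\<integral>\<^sup>+s. (\<integral>\<^sup>+x. ennreal (indicator {0..t} s * H s x) \<partial>M) \<partial>lborel)"
    by (rule L.Fubini'[OF Fm])
  also have "\<dots> \<le> (\<integral>\<^sup>+s. ennreal K * indicator {0..t} s \<partial>lborel)"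
  proof (rule nn_integral_mono_AE)
    show "AE s in lborel. (\<integral>\<^sup>+x. ennreal (indicator {0..t} s * H s x) \<partial>M) \<le> ennreal K * indicator {0..t} s"
      using AE_lborel_singleton[of 0]
    proof eventually_elim
      case (elim s)
      show ?case
      proof (cases "s \<in> {0..t}")
        case True
        then have "s \<in> {0<..t}" using elim by auto
        then show ?thesis using K[of s] True by simp
      next
        case False then show ?thesis by simp
      qed
    qed
  qed
  also have "\<dots> = ennreal K * ennreal t"
    using t by (simp add: nn_integral_cmult_indicator)
  finally have "(\<integral>\<^sup>+x. ennreal ((1/t) * (LINT s:{0..t}|lborel. H s x)) \<partial>M) \<le> ennreal (1/t) * (ennreal K * ennreal t)"
    by (simp add: mult_left_mono)
  also have "\<dots> = ennreal K" using t K0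
    by (simp add: ennreal_mult[symmetric])
  finally show ?thesis .
qed




lemma sq_diff_le: "((a::real) - b)\<^sup>2 \<le> 2*a\<^sup>2 + 2*b\<^sup>2"
proof -
  have "0 \<le> (a + b)\<^sup>2" by simp
  then show ?thesis by (simp add: power2_eq_square algebra_simps)
qed
lemma sq_le2: "(a::real)\<^sup>2 \<le> 2*(a - b)\<^sup>2 + 2*b\<^sup>2"
  using sq_diff_le[of "a - b" "-b"] by simp

lemma L2_diff_int:
  assumes "L2 M f" "L2 M g"
  shows "integrable M (\<lambda>x. (f x - g x)\<^sup>2)"
proof (rule Bochner_Integration.integrable_bound[where f="\<lambda>x. 2 * (f x)\<^sup>2 + 2 * (g x)\<^sup>2"])
  show "integrable M (\<lambda>x. 2 * (f x)\<^sup>2 + 2 * (g x)\<^sup>2)" using assms unfolding L2_def by auto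
  show "(\<lambda>x. (f x - g x)\<^sup>2) \<in> borel_measurable M"
    by (intro borel_measurable_power borel_measurable_diff) (use assms in \<open>auto simp: L2_def\<close>)
  show "AE x in M. norm ((f x - g x)\<^sup>2) \<le> norm (2 * (f x)\<^sup>2 + 2 * (g x)\<^sup>2)"
    using sq_diff_le by (intro AE_I2) simp
qed

lemma L2_sq_bound:
  assumes "L2 M f" "L2 M g"
  shows "(\<integral>x. (f x)\<^sup>2 \<partial>M) \<le> 2 * (\<integral>x. (f x - g x)\<^sup>2 \<partial>M) + 2 * (\<integral>x. (g x)\<^sup>2 \<partial>M)"
proof -
  have "(\<integral>x. (f x)\<^sup>2 \<partial>M) \<le> (\<integral>x. 2 * (f x - g x)\<^sup>2 + 2 * (g x)\<^sup>2 \<partial>M)"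
    using assms L2_diff_int[OF assms] unfolding L2_def
    by (intro integral_mono) (auto intro: sq_le2)
  also have "\<dots> = 2 * (\<integral>x. (f x - g x)\<^sup>2 \<partial>M) + 2 * (\<integral>x. (g x)\<^sup>2 \<partial>M)"
    using assms L2_diff_int[OF assms] unfolding L2_def by simp
  finally show ?thesis .
qed

context setting begin

lemmas sgdef = sg[unfolded strongly_cont_semigroup_L2_def]
lemma sgL2: "0 \<le> t \<Longrightarrow> L2 M f \<Longrightarrow> L2 M (T t f)"
  using sgdef[THEN conjunct1] by blast
lemma sgC: "0 \<le> t \<Longrightarrow> \<exists>C. \<forall>f. L2 M f \<longrightarrow> (\<integral>x. (T t f x)\<^sup>2 \<partial>M) \<le> C * (\<integral>x. (f x)\<^sup>2 \<partial>M)"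
  using sgdef[THEN conjunct2, THEN conjunct2, THEN conjunct2, THEN conjunct1] by blast
lemma sg0: "L2 M f \<Longrightarrow> AE x in M. T 0 f x = f x"
  using sgdef[THEN conjunct2, THEN conjunct2, THEN conjunct2, THEN conjunct2, THEN conjunct1] by blast
lemma sgS: "0 \<le> s \<Longrightarrow> 0 \<le> t \<Longrightarrow> L2 M f \<Longrightarrow> AE x in M. T (s + t) f x = T s (T t f) x"
  using sgdef[THEN conjunct2, THEN conjunct2, THEN conjunct2, THEN conjunct2, THEN conjunct2, THEN conjunct1] by blast
lemma sgcont: "L2 M f \<Longrightarrow> ((\<lambda>t. \<integral>x. (T t f x - f x)\<^sup>2 \<partial>M) \<longlongrightarrow> 0) (at_right 0)"
  using sgdef[THEN conjunct2, THEN conjunct2, THEN conjunct2, THEN conjunct2, THEN conjunct2, THEN conjunct2] by blast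

lemma sgsmall:
  assumes "L2 M f" "0 < e"
  shows "\<exists>b>0. \<forall>s. 0 < s \<longrightarrow> s < b \<longrightarrow> (\<integral>x. (T s f x - f x)\<^sup>2 \<partial>M) < e"
proof -
  have "eventually (\<lambda>s. (\<integral>x. (T s f x - f x)\<^sup>2 \<partial>M) < e) (at_right 0)"
    using order_tendstoD(2)[OF sgcont[OF assms(1)] assms(2)] .
  then show ?thesis unfolding eventually_at_right[OF zero_less_one] by auto
qed

lemma local_bound:
  assumes f: "L2 M f" and t: "0 < t"
  shows "\<exists>K\<ge>0. \<forall>s\<in>{0..t}. (\<integral>x. (T s f x)\<^sup>2 \<partial>M) \<le> K"
proof -
  obtain b where b: "b > 0" "\<And>s. 0 < s \<Longrightarrow> s < b \<Longrightarrow> (\<integral>x. (T s f x - f x)\<^sup>2 \<partial>M) < 1"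
    using sgsmall[OF f zero_less_one] by blast
  define d where "d = b / 2"
  have d: "0 < d" "d < b" using b by (auto simp: d_def)
  define K0 where "K0 = 2 + 2 * (\<integral>x. (f x)\<^sup>2 \<partial>M)"
  have f2: "0 \<le> (\<integral>x. (f x)\<^sup>2 \<partial>M)" by simp
  have base: "(\<integral>x. (T s f x)\<^sup>2 \<partial>M) \<le> K0" if s: "s \<in> {0..d}" for s
  proof (cases "s = 0")
    case True
    have "(\<integral>x. (T s f x)\<^sup>2 \<partial>M) = (\<integral>x. (f x)\<^sup>2 \<partial>M)"
      using True sg0[OF f] sgL2[of 0 f] f unfolding L2_def
      by (intro integral_cong_AE) auto
    then show ?thesis using f2 by (simp add: K0_def)
  next
    case False
    then have "0 < s" "s < b" using s d by auto
    then have "(\<integral>x. (T s f x - f x)\<^sup>2 \<partial>M) < 1" by (rule b(2))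
    moreover have "(\<integral>x. (T s f x)\<^sup>2 \<partial>M) \<le> 2 * (\<integral>x. (T s f x - f x)\<^sup>2 \<partial>M) + 2 * (\<integral>x. (f x)\<^sup>2 \<partial>M)"
      using L2_sq_bound[OF sgL2[OF _ f] f] \<open>0 < s\<close> by simp
    ultimately show ?thesis by (simp add: K0_def)
  qed
  obtain C where C: "\<And>g. L2 M g \<Longrightarrow> (\<integral>x. (T d g x)\<^sup>2 \<partial>M) \<le> C * (\<integral>x. (g x)\<^sup>2 \<partial>M)"
    using sgC[of d] d by auto
  define C' where "C' = max C 1"
  have C'1: "1 \<le> C'" by (simp add: C'_def)
  have K00: "0 \<le> K0" using f2 by (simp add: K0_def)
  have ind: "\<forall>s\<in>{0..real n * d + d}. (\<integral>x. (T s f x)\<^sup>2 \<partial>M) \<le> K0 * C' ^ n" for n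
  proof (induction n)
    case 0
    then show ?case using base by simp
  next
    case (Suc n)
    show ?case
    proof
      fix s assume s: "s \<in> {0..real (Suc n) * d + d}"
      have mono: "K0 * C' ^ n \<le> K0 * C' ^ Suc n"
        using C'1 K00 by (intro mult_left_mono) (auto intro!: power_increasing)
      show "(\<integral>x. (T s f x)\<^sup>2 \<partial>M) \<le> K0 * C' ^ Suc n"
      proof (cases "s \<le> real n * d + d")
        case True
        then show ?thesis using Suc.IH s mono by force
      next
        case False
        have nd: "0 \<le> real n * d" using d by simp
        have ds: "d \<le> s" using False nd by linarith
        have s1: "s - d \<in> {0..real n * d + d}" "0 \<le> s - d" using s ds
          by (auto simp: algebra_simps)
        have L: "L2 M (T (s - d) f)" using sgL2[OF s1(2) f] .
        have "(\<integral>x. (T s f x)\<^sup>2 \<partial>M) = (\<integral>x. (T d (T (s - d) f) x)\<^sup>2 \<partial>M)"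
        proof (rule integral_cong_AE)
          show "(\<lambda>x. (T s f x)\<^sup>2) \<in> borel_measurable M"
            using sgL2[OF _ f, of s] s d unfolding L2_def by auto
          show "(\<lambda>x. (T d (T (s - d) f) x)\<^sup>2) \<in> borel_measurable M"
            using sgL2[OF _ L, of d] d unfolding L2_def by auto
          show "AE x in M. (T s f x)\<^sup>2 = (T d (T (s - d) f) x)\<^sup>2"
            using sgS[OF _ s1(2) f, of d] d by auto
        qed
        also have "\<dots> \<le> C * (\<integral>x. (T (s - d) f x)\<^sup>2 \<partial>M)" by (rule C[OF L])
        also have "\<dots> \<le> C' * (\<integral>x. (T (s - d) f x)\<^sup>2 \<partial>M)"
          by (intro mult_right_mono) (auto simp: C'_def)
        also have "\<dots> \<le> C' * (K0 * C' ^ n)"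
          using Suc.IH s1 C'1 by (intro mult_left_mono) auto
        finally show ?thesis by (simp add: algebra_simps)
      qed
    qed
  qed
  obtain n :: nat where n: "t / d \<le> real n" using real_arch_simple by blast
  have "t \<le> real n * d + d" using n d by (simp add: field_simps)
  then show ?thesis using ind[of n] K00 C'1 by (intro exI[of _ "K0 * C' ^ n"]) auto
qed

lemma ptf_bounds:
  assumes f: "f \<in> borel_measurable M" and ab: "\<And>y. y \<in> space M \<Longrightarrow> a \<le> f y \<and> f y \<le> b"
    and s: "0 \<le> s" and x: "x \<in> space M"
  shows "a \<le> ptf p s f x \<and> ptf p s f x \<le> b"
proof -
  have ps: "prob_space (p s x)" and ss: "sets (p s x) = sets M"
    using tp s x unfolding transition_prob_def by auto
  interpret P: prob_space "p s x" by (rule ps)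
  have sp: "space (p s x) = space M" using ss by (rule sets_eq_imp_space_eq)
  have fm: "f \<in> borel_measurable (p s x)" by (subst measurable_cong_sets[OF ss refl]) (rule f)
  have bnd: "norm (f y) \<le> max \<bar>a\<bar> \<bar>b\<bar>" if "y \<in> space (p s x)" for y
  proof -
    have "a \<le> f y \<and> f y \<le> b" using ab that sp by auto
    then show ?thesis using ab[of y] that sp abs_ge_self[of a] abs_ge_minus_self[of a] abs_ge_self[of b] abs_ge_minus_self[of b]
      unfolding real_norm_def abs_le_iff by linarith
  qed
  have int: "integrable (p s x) f"
    by (rule P.integrable_const_bound[OF AE_I2[OF bnd] fm])
  have "(\<integral>y. a \<partial>p s x) \<le> (\<integral>y. f y \<partial>p s x)" using ab sp int by (intro integral_mono) auto
  moreover have "(\<integral>y. f y \<partial>p s x) \<le> (\<integral>y. b \<partial>p s x)" using ab sp int by (intro integral_mono) auto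
  moreover have m1: "measure (p s x) (space (p s x)) = 1" using P.prob_space by simp
  ultimately show ?thesis unfolding ptf_def lebesgue_integral_const m1 by simp
qed

end



context setting begin

lemma Dfacts:
  assumes "u \<in> Dset M"
  shows "u \<in> borel_measurable M" "integrable M u" "\<exists>B\<ge>0. \<forall>x\<in>space M. 0 \<le> u x \<and> u x \<le> B"
proof -
  show "u \<in> borel_measurable M" "integrable M u" using assms by (auto simp: Dset_def bdd_meas_def)
  obtain B where B: "\<forall>x\<in>space M. \<bar>u x\<bar> \<le> B" using assms by (auto simp: Dset_def bdd_meas_def)
  have "\<forall>x\<in>space M. 0 \<le> u x \<and> u x \<le> max B 0" using assms B by (auto simp: Dset_def)
  then show "\<exists>B\<ge>0. \<forall>x\<in>space M. 0 \<le> u x \<and> u x \<le> B" by (intro exI[of _ "max B 0"]) auto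
qed

lemma Dsq:
  assumes "u \<in> Dset M"
  shows "integrable M (\<lambda>x. (u x)\<^sup>2)" "L2 M u" "bdd_meas M u"
proof -
  obtain B where B: "B \<ge> 0" "\<forall>x\<in>space M. 0 \<le> u x \<and> u x \<le> B" using Dfacts(3)[OF assms] by blast
  have um: "u \<in> borel_measurable M" and ui: "integrable M u" using Dfacts[OF assms] by auto
  show i: "integrable M (\<lambda>x. (u x)\<^sup>2)"
  proof (rule Bochner_Integration.integrable_bound[where f="\<lambda>x. B * u x"])
    show "integrable M (\<lambda>x. B * u x)" using ui by simp
    show "(\<lambda>x. (u x)\<^sup>2) \<in> borel_measurable M" using um by measurable
    show "AE x in M. norm ((u x)\<^sup>2) \<le> norm (B * u x)"
    proof (rule AE_I2)
      fix x assume "x \<in> space M"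
      then have "0 \<le> u x" "u x \<le> B" using B by auto
      then show "norm ((u x)\<^sup>2) \<le> norm (B * u x)"
        by (simp add: power2_eq_square abs_mult mult_right_mono)
    qed
  qed
  show "L2 M u" using i um by (simp add: L2_def)
  show "bdd_meas M u" using assms by (simp add: Dset_def)
qed

lemma P_meas_s:
  assumes "u \<in> borel_measurable M" "0 \<le> s"
  shows "ptf p s u \<in> borel_measurable M"
proof -
  have "s \<in> space (restrict_space borel {0..})" using assms by (simp add: space_restrict_space)
  from measurable_compose[OF measurable_Pair1'[OF this] P_meas[OF assms(1)]]
  show ?thesis by simp
qed

lemma P_AE:
  assumes "u \<in> Dset M" "0 \<le> s"
  shows "AE x in M. ptf p s u x = T s u x"
  using rep[OF assms(2) Dsq(3)[OF assms(1)] Dsq(1)[OF assms(1)]] .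

lemma P_L2:
  assumes "u \<in> Dset M" "0 \<le> s"
  shows "L2 M (ptf p s u)"
proof -
  have m: "ptf p s u \<in> borel_measurable M" using P_meas_s Dfacts(1) assms by blast
  have "L2 M (T s u)" using sgL2[OF assms(2) Dsq(2)[OF assms(1)]] .
  then have "integrable M (\<lambda>x. (T s u x)\<^sup>2)" "T s u \<in> borel_measurable M" by (auto simp: L2_def)
  moreover have "integrable M (\<lambda>x. (ptf p s u x)\<^sup>2) \<longleftrightarrow> integrable M (\<lambda>x. (T s u x)\<^sup>2)"
    using P_AE[OF assms] m calculation(2) by (intro integrable_cong_AE) auto
  ultimately show ?thesis using m by (simp add: L2_def)
qed

definition Q :: "('a \<Rightarrow> real) \<Rightarrow> real \<Rightarrow> 'a \<Rightarrow> real" where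
  "Q u s x = ptf p (max 0 s) u x"

lemma Q_meas2: "u \<in> borel_measurable M \<Longrightarrow> (\<lambda>(s,x). Q u s x) \<in> borel_measurable (lborel \<Otimes>\<^sub>M M)"
  unfolding Q_def by (rule Q_meas)

lemma Q_meas3:
  assumes "u \<in> borel_measurable M"
  shows "(\<lambda>(x,s). Q u s x) \<in> borel_measurable (M \<Otimes>\<^sub>M lborel)"
proof -
  have "(\<lambda>(s,x). Q u s x) \<circ> (\<lambda>(x,y). (y,x)) \<in> borel_measurable (M \<Otimes>\<^sub>M lborel)"
    by (rule measurable_comp[OF measurable_pair_swap' Q_meas2[OF assms]])
  moreover have "(\<lambda>(s,x). Q u s x) \<circ> (\<lambda>(x,y). (y,x)) = (\<lambda>(x,s). Q u s x)" by auto
  ultimately show ?thesis by simp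
qed

lemma Q_eq: "s \<in> {0..t} \<Longrightarrow> Q u s x = ptf p s u x"
  by (simp add: Q_def)

lemma avg_Q: "(LINT s:{0..t}|lborel. ptf p s u x) = (LINT s:{0..t}|lborel. Q u s x)"
  by (rule set_lebesgue_integral_cong) (auto simp: Q_eq)

lemma avg_meas:
  assumes "u \<in> borel_measurable M"
  shows "(\<lambda>x. (1 / t) * (\<integral>s\<in>{0..t}. ptf p s u x \<partial>lborel)) \<in> borel_measurable M"
proof -
  have "(\<lambda>x. \<integral>s. indicator {0..t} s *\<^sub>R Q u s x \<partial>lborel) \<in> borel_measurable M"
  proof (rule lborel.borel_measurable_lebesgue_integral)
    have i: "(\<lambda>z. indicator {0..t} (snd z) :: real) \<in> borel_measurable (M \<Otimes>\<^sub>M lborel)" by measurable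
    have q: "(\<lambda>z. Q u (snd z) (fst z)) \<in> borel_measurable (M \<Otimes>\<^sub>M lborel)"
      using Q_meas3[OF assms] by (simp add: case_prod_beta)
    show "(\<lambda>(x, s). indicator {0..t} s *\<^sub>R Q u s x) \<in> borel_measurable (M \<Otimes>\<^sub>M lborel)"
      using borel_measurable_scaleR[OF i q] by (simp add: case_prod_beta)
  qed
  from borel_measurable_times[OF borel_measurable_const this]
  have "(\<lambda>x. (1/t) * (\<integral>s. indicator {0..t} s *\<^sub>R Q u s x \<partial>lborel)) \<in> borel_measurable M" .
  moreover have "(\<lambda>x. (1/t) * (\<integral>s\<in>{0..t}. ptf p s u x \<partial>lborel)) = (\<lambda>x. (1/t) * (\<integral>s. indicator {0..t} s *\<^sub>R Q u s x \<partial>lborel))"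
    by (simp only: avg_Q) (simp add: set_lebesgue_integral_def)
  ultimately show ?thesis by simp
qed

end



lemma mean_const_diff:
  fixes h :: "real \<Rightarrow> real"
  assumes hm: "h \<in> borel_measurable lborel" and hb: "\<And>s. s \<in> {0..t} \<Longrightarrow> \<bar>h s\<bar> \<le> c" and t: "0 < t"
  shows "(1/t) * (LINT s:{0..t}|lborel. a - h s) = a - (1/t) * (LINT s:{0..t}|lborel. h s)"
proof -
  have i1: "integrable lborel (\<lambda>s. indicator {0..t} s * h s)" by (rule si_bdd[OF hm hb])
  have i3: "integrable lborel (\<lambda>s. indicator {0..t::real} s :: real)"
    using si_bdd[of "\<lambda>_. 1" t 1] by simp
  have "(LINT s:{0..t}|lborel. a - h s) = (\<integral>s. a * indicator {0..t} s - indicator {0..t} s * h s \<partial>lborel)"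
    unfolding set_lebesgue_integral_def by (rule Bochner_Integration.integral_cong) (auto simp: algebra_simps)
  also have "\<dots> = a * t - (LINT s:{0..t}|lborel. h s)"
    using i1 i3 t by (simp add: set_lebesgue_integral_def)
  finally show ?thesis using t by (simp add: field_simps)
qed

context setting begin

lemma Q_bounds:
  assumes "u \<in> Dset M" "\<forall>x\<in>space M. 0 \<le> u x \<and> u x \<le> B" "s \<in> {0..t}" "x \<in> space M"
  shows "0 \<le> Q u s x \<and> Q u s x \<le> B"
  using ptf_bounds[OF Dfacts(1)[OF assms(1)], of 0 B s x] assms by (auto simp: Q_eq)

lemma Qm: "u \<in> borel_measurable M \<Longrightarrow> (\<lambda>z. Q u (fst z) (snd z)) \<in> borel_measurable (lborel \<Otimes>\<^sub>M M)"
  using Q_meas2[of u] by (simp add: case_prod_beta)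

lemma Qs_meas: "u \<in> borel_measurable M \<Longrightarrow> x \<in> space M \<Longrightarrow> (\<lambda>s. Q u s x) \<in> borel_measurable lborel"
  using measurable_compose[OF measurable_Pair2'[of x M lborel] Qm[of u]] by simp

lemma um2: "u \<in> borel_measurable M \<Longrightarrow> (\<lambda>z. u (snd z)) \<in> borel_measurable (lborel \<Otimes>\<^sub>M M)"
  by (rule measurable_compose[OF measurable_snd])

lemma P_sq_nn:
  assumes "u \<in> Dset M" "0 \<le> s"
  shows "(\<integral>\<^sup>+x. ennreal ((ptf p s u x)\<^sup>2) \<partial>M) = ennreal (\<integral>x. (T s u x)\<^sup>2 \<partial>M)"
proof -
  have L: "L2 M (ptf p s u)" "L2 M (T s u)" using P_L2[OF assms] sgL2[OF assms(2) Dsq(2)[OF assms(1)]] .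
  have "(\<integral>\<^sup>+x. ennreal ((ptf p s u x)\<^sup>2) \<partial>M) = ennreal (\<integral>x. (ptf p s u x)\<^sup>2 \<partial>M)"
    using L by (intro nn_integral_eq_integral) (auto simp: L2_def)
  also have "(\<integral>x. (ptf p s u x)\<^sup>2 \<partial>M) = (\<integral>x. (T s u x)\<^sup>2 \<partial>M)"
    using L P_AE[OF assms] by (intro integral_cong_AE) (auto simp: L2_def)
  finally show ?thesis .
qed

lemma P_diff_nn:
  assumes "u \<in> Dset M" "0 \<le> s"
  shows "(\<integral>\<^sup>+x. ennreal ((u x - ptf p s u x)\<^sup>2) \<partial>M) = ennreal (\<integral>x. (T s u x - u x)\<^sup>2 \<partial>M)"
proof -
  have L: "L2 M (ptf p s u)" "L2 M (T s u)" "L2 M u"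
    using P_L2[OF assms] sgL2[OF assms(2) Dsq(2)[OF assms(1)]] Dsq(2)[OF assms(1)] .
  have "(\<integral>\<^sup>+x. ennreal ((u x - ptf p s u x)\<^sup>2) \<partial>M) = ennreal (\<integral>x. (u x - ptf p s u x)\<^sup>2 \<partial>M)"
    using L2_diff_int[OF L(3) L(1)] by (intro nn_integral_eq_integral) auto
  also have "(\<integral>x. (u x - ptf p s u x)\<^sup>2 \<partial>M) = (\<integral>x. (T s u x - u x)\<^sup>2 \<partial>M)"
    using L P_AE[OF assms] by (intro integral_cong_AE) (auto simp: L2_def power2_commute)
  finally show ?thesis .
qed

lemma L2mem:
  assumes u: "u \<in> Dset M" and t: "0 < t"
  shows "L2 M (\<lambda>x. (1 / t) * (\<integral>s\<in>{0..t}. ptf p s u x \<partial>lborel))"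
    and "\<forall>x\<in>space M. 0 \<le> (1 / t) * (\<integral>s\<in>{0..t}. ptf p s u x \<partial>lborel)"
proof -
  define g where "g = (\<lambda>x. (1 / t) * (\<integral>s\<in>{0..t}. ptf p s u x \<partial>lborel))"
  obtain B where B: "B \<ge> 0" "\<forall>x\<in>space M. 0 \<le> u x \<and> u x \<le> B" using Dfacts(3)[OF u] by blast
  have um: "u \<in> borel_measurable M" using Dfacts(1)[OF u] .
  obtain K where K: "K \<ge> 0" "\<forall>s\<in>{0..t}. (\<integral>x. (T s u x)\<^sup>2 \<partial>M) \<le> K"
    using local_bound[OF Dsq(2)[OF u] t] by blast
  have gQ: "g x = (1/t) * (LINT s:{0..t}|lborel. Q u s x)" for x
    by (simp add: g_def avg_Q)
  have gm: "g \<in> borel_measurable M" unfolding g_def by (rule avg_meas[OF um])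
  have gnn: "0 \<le> g x" if x: "x \<in> space M" for x
  proof -
    have "0 \<le> (LINT s:{0..t}|lborel. Q u s x)"
      unfolding set_lebesgue_integral_def
      by (rule Bochner_Integration.integral_nonneg) (use Q_bounds[OF u B(2) _ x] in \<open>auto simp: indicator_def\<close>)
    then show ?thesis using t by (simp add: gQ)
  qed
  have pw: "(g x)\<^sup>2 \<le> (1/t) * (LINT s:{0..t}|lborel. (Q u s x)\<^sup>2)" if x: "x \<in> space M" for x
    unfolding gQ
    by (rule mean_sq[OF Qs_meas[OF um x] _ t, where c=B]) (use Q_bounds[OF u B(2) _ x] in force)
  have "(\<integral>\<^sup>+x. ennreal ((g x)\<^sup>2) \<partial>M) \<le> (\<integral>\<^sup>+x. ennreal ((1/t) * (LINT s:{0..t}|lborel. (Q u s x)\<^sup>2)) \<partial>M)"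
    using pw by (intro nn_integral_mono) (simp add: ennreal_leI)
  also have "\<dots> \<le> ennreal K"
  proof (rule avg_bound[where c="B\<^sup>2"])
    show "(\<lambda>(s, x). (Q u s x)\<^sup>2) \<in> borel_measurable (lborel \<Otimes>\<^sub>M M)"
      using borel_measurable_power[OF Qm[OF um], of 2] by (simp add: case_prod_beta)
    show "0 \<le> (Q u s x)\<^sup>2 \<and> (Q u s x)\<^sup>2 \<le> B\<^sup>2" if "s \<in> {0..t}" "x \<in> space M" for s x
      using Q_bounds[OF u B(2) that] by (auto intro: power_mono)
    show "0 < t" by (rule t)
    show "0 \<le> K" by (rule K(1))
    fix s assume s: "s \<in> {0<..t}"
    have "(\<integral>\<^sup>+x. ennreal ((Q u s x)\<^sup>2) \<partial>M) = (\<integral>\<^sup>+x. ennreal ((ptf p s u x)\<^sup>2) \<partial>M)"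
      using s by (simp add: Q_def)
    also have "\<dots> = ennreal (\<integral>x. (T s u x)\<^sup>2 \<partial>M)" using P_sq_nn[OF u] s by simp
    also have "\<dots> \<le> ennreal K" using K(2) s by (intro ennreal_leI) auto
    finally show "(\<integral>\<^sup>+x. ennreal ((Q u s x)\<^sup>2) \<partial>M) \<le> ennreal K" .
  qed
  finally have fin: "(\<integral>\<^sup>+x. ennreal ((g x)\<^sup>2) \<partial>M) < \<infinity>" using le_less_trans by fastforce
  have "integrable M (\<lambda>x. (g x)\<^sup>2)"
    by (rule integrableI_nonneg) (use gm fin in auto)
  then show "L2 M g" using gm by (simp add: L2_def)
  show "\<forall>x\<in>space M. 0 \<le> g x" using gnn by blast
qed

end



context setting begin

lemma L2approx:
  assumes u: "u \<in> Dset M" and e: "0 < e"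
  shows "\<exists>d>0. \<forall>t. 0 < t \<longrightarrow> t < d \<longrightarrow>
           (\<integral>x. (u x - (1 / t) * (\<integral>s\<in>{0..t}. ptf p s u x \<partial>lborel))\<^sup>2 \<partial>M) < e"
proof -
  obtain B where B: "B \<ge> 0" "\<forall>x\<in>space M. 0 \<le> u x \<and> u x \<le> B" using Dfacts(3)[OF u] by blast
  have um: "u \<in> borel_measurable M" using Dfacts(1)[OF u] .
  obtain d where d: "d > 0" "\<And>s. 0 < s \<Longrightarrow> s < d \<Longrightarrow> (\<integral>x. (T s u x - u x)\<^sup>2 \<partial>M) < e/2"
    using sgsmall[OF Dsq(2)[OF u], of "e/2"] e by auto
  show ?thesis
  proof (intro exI[of _ d] conjI allI impI)
    show "0 < d" by (rule d(1))
    fix t :: real assume t: "0 < t" "t < d"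
    define g where "g = (\<lambda>x. (1 / t) * (\<integral>s\<in>{0..t}. ptf p s u x \<partial>lborel))"
    have gQ: "g x = (1/t) * (LINT s:{0..t}|lborel. Q u s x)" for x
      by (simp add: g_def avg_Q)
    have ugQ: "u x - g x = (1/t) * (LINT s:{0..t}|lborel. u x - Q u s x)" if x: "x \<in> space M" for x
      unfolding gQ
      by (rule mean_const_diff[OF Qs_meas[OF um x] _ t(1), where c=B, symmetric])
         (use Q_bounds[OF u B(2) _ x] in force)
    have pw: "(u x - g x)\<^sup>2 \<le> (1/t) * (LINT s:{0..t}|lborel. (u x - Q u s x)\<^sup>2)" if x: "x \<in> space M" for x
      unfolding ugQ[OF x]
    proof (rule mean_sq[OF _ _ t(1), where c=B])
      show "(\<lambda>s. u x - Q u s x) \<in> borel_measurable lborel" using Qs_meas[OF um x] by simp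
      fix s assume "s \<in> {0..t}"
      then show "\<bar>u x - Q u s x\<bar> \<le> B" using Q_bounds[OF u B(2) _ x, of s t] B(2) x by auto
    qed
    have L: "L2 M u" "L2 M g" using Dsq(2)[OF u] L2mem(1)[OF u t(1)] by (auto simp: g_def)
    have int: "integrable M (\<lambda>x. (u x - g x)\<^sup>2)" by (rule L2_diff_int[OF L])
    have "ennreal (\<integral>x. (u x - g x)\<^sup>2 \<partial>M) = (\<integral>\<^sup>+x. ennreal ((u x - g x)\<^sup>2) \<partial>M)"
      using int by (intro nn_integral_eq_integral[symmetric]) auto
    also have "\<dots> \<le> (\<integral>\<^sup>+x. ennreal ((1/t) * (LINT s:{0..t}|lborel. (u x - Q u s x)\<^sup>2)) \<partial>M)"
      using pw by (intro nn_integral_mono) (simp add: ennreal_leI)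
    also have "\<dots> \<le> ennreal (e/2)"
    proof (rule avg_bound[where c="B\<^sup>2"])
      show "(\<lambda>(s, x). (u x - Q u s x)\<^sup>2) \<in> borel_measurable (lborel \<Otimes>\<^sub>M M)"
        using borel_measurable_power[OF borel_measurable_diff[OF um2[OF um] Qm[OF um]], of 2]
        by (simp add: case_prod_beta)
      show "0 \<le> (u x - Q u s x)\<^sup>2 \<and> (u x - Q u s x)\<^sup>2 \<le> B\<^sup>2" if "s \<in> {0..t}" "x \<in> space M" for s x
      proof -
        have "\<bar>u x - Q u s x\<bar> \<le> B" using Q_bounds[OF u B(2) that] B(2) that by auto
        then have "\<bar>u x - Q u s x\<bar>\<^sup>2 \<le> B\<^sup>2" by (intro power_mono) auto
        then show ?thesis by simp
      qed
      show "0 < t" by (rule t)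
      show "0 \<le> e/2" using e by simp
      fix s assume s: "s \<in> {0<..t}"
      have "(\<integral>\<^sup>+x. ennreal ((u x - Q u s x)\<^sup>2) \<partial>M) = (\<integral>\<^sup>+x. ennreal ((u x - ptf p s u x)\<^sup>2) \<partial>M)"
        using s by (simp add: Q_def)
      also have "\<dots> = ennreal (\<integral>x. (T s u x - u x)\<^sup>2 \<partial>M)" using P_diff_nn[OF u] s by simp
      also have "\<dots> \<le> ennreal (e/2)" using d(2)[of s] s t by (intro ennreal_leI) auto
      finally show "(\<integral>\<^sup>+x. ennreal ((u x - Q u s x)\<^sup>2) \<partial>M) \<le> ennreal (e/2)" .
    qed
    finally have "(\<integral>x. (u x - g x)\<^sup>2 \<partial>M) \<le> e/2" using e by (simp add: ennreal_le_iff)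
    then show "(\<integral>x. (u x - (1 / t) * (\<integral>s\<in>{0..t}. ptf p s u x \<partial>lborel))\<^sup>2 \<partial>M) < e"
      using e by (simp add: g_def)
  qed
qed

end



definition tr :: "nat \<Rightarrow> ('a \<Rightarrow> real) \<Rightarrow> 'a \<Rightarrow> real" where
  "tr n f x = (if 1 / real (Suc n) \<le> f x then min (f x) (real (Suc n)) else 0)"

lemma tr_nn: "0 \<le> tr n f x"
proof (cases "1 / real (Suc n) \<le> f x")
  case True
  have "0 < 1 / real (Suc n)" by simp
  then have "0 \<le> f x" using True by linarith
  then show ?thesis using True by (simp add: tr_def)
qed (simp add: tr_def)

lemma tr_le_n: "tr n f x \<le> real (Suc n)"
  by (auto simp: tr_def)

lemma tr_le_abs: "tr n f x \<le> \<bar>f x\<bar>"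
  by (auto simp: tr_def)

lemma tr_diff: "\<bar>f x - tr n f x\<bar> \<le> \<bar>f x\<bar>"
  using tr_nn[of n f x] tr_le_abs[of n f x] by (auto simp: tr_def)

lemma tr_sq: "tr n f x \<le> real (Suc n) * (f x)\<^sup>2"
proof (cases "1 / real (Suc n) \<le> f x")
  case True
  then have f0: "0 < f x" by (smt (verit) of_nat_0_less_iff zero_less_Suc zero_less_divide_1_iff)
  have "1 \<le> real (Suc n) * f x" using True by (simp add: field_simps)
  then have "f x \<le> real (Suc n) * f x * f x" using f0 by (simp add: mult_le_cancel_right1)
  then show ?thesis using True by (simp add: tr_def power2_eq_square mult.assoc)
next
  case False then show ?thesis by (simp add: tr_def)
qed

lemma tr_zero: "x \<notin> {y. 1 / real (Suc n) \<le> f y} \<Longrightarrow> tr n f x = 0"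
  by (simp add: tr_def)

lemma tr_lim:
  assumes "0 \<le> f x"
  shows "(\<lambda>n. tr n f x) \<longlonglongrightarrow> f x"
proof (cases "f x = 0")
  case True
  have "tr n f x = 0" for n using True by (simp add: tr_def)
  then show ?thesis using True by simp
next
  case False
  then have f0: "0 < f x" using assms by simp
  obtain N :: nat where N: "1 / f x < real N" "f x < real N"
    using reals_Archimedean2[of "max (1 / f x) (f x)"] by auto
  have "eventually (\<lambda>n. tr n f x = f x) sequentially"
    unfolding eventually_sequentially
  proof (intro exI allI impI)
    fix n assume n: "N \<le> n"
    then have "real N \<le> real (Suc n)" by simp
    then have a: "1 / f x < real (Suc n)" "f x < real (Suc n)" using N by linarith+
    then have "1 / real (Suc n) \<le> f x" using f0 by (simp add: field_simps)
    then show "tr n f x = f x" using a by (simp add: tr_def)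
  qed
  then show ?thesis by (rule tendsto_eventually)
qed

lemma tr_meas:
  assumes [measurable]: "f \<in> borel_measurable M"
  shows "tr n f \<in> borel_measurable M"
  unfolding tr_def[abs_def] by measurable

lemma tr_Dset_L2:
  assumes f: "f \<in> borel_measurable M" "integrable M (\<lambda>x. (f x)\<^sup>2)"
  shows "tr n f \<in> Dset M"
proof -
  have m: "tr n f \<in> borel_measurable M" using tr_meas[OF f(1)] .
  have "integrable M (tr n f)"
  proof (rule Bochner_Integration.integrable_bound[where f="\<lambda>x. real (Suc n) * (f x)\<^sup>2"])
    show "integrable M (\<lambda>x. real (Suc n) * (f x)\<^sup>2)" using f(2) by simp
    show "AE x in M. norm (tr n f x) \<le> norm (real (Suc n) * (f x)\<^sup>2)"
      using tr_sq[of n f] tr_nn[of n f] by (intro AE_I2) simp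
  qed (rule m)
  then show ?thesis using m tr_nn[of n f] tr_le_n[of n f]
    by (auto simp: Dset_def bdd_meas_def intro!: exI[of _ "real (Suc n)"])
qed

lemma tr_Dset_L1:
  assumes f: "f \<in> borel_measurable M" "integrable M f"
  shows "tr n f \<in> Dset M"
proof -
  have m: "tr n f \<in> borel_measurable M" using tr_meas[OF f(1)] .
  have "integrable M (tr n f)"
  proof (rule Bochner_Integration.integrable_bound[where f="f"])
    show "AE x in M. norm (tr n f x) \<le> norm (f x)"
      using tr_le_abs[of n f] tr_nn[of n f] by (intro AE_I2) simp
  qed (use f m in auto)
  then show ?thesis using m tr_nn[of n f] tr_le_n[of n f]
    by (auto simp: Dset_def bdd_meas_def intro!: exI[of _ "real (Suc n)"])
qed

lemma approx_L2:
  assumes f: "L2 M f" "AE x in M. 0 \<le> f x" and e: "0 < e"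
  shows "\<exists>u\<in>Dset M. (\<integral>x. (f x - u x)\<^sup>2 \<partial>M) < e"
proof -
  have fm: "f \<in> borel_measurable M" and f2: "integrable M (\<lambda>x. (f x)\<^sup>2)" using f by (auto simp: L2_def)
  have lim: "(\<lambda>n. \<integral>x. (f x - tr n f x)\<^sup>2 \<partial>M) \<longlonglongrightarrow> (\<integral>x. 0 \<partial>M)"
  proof (rule integral_dominated_convergence[where w="\<lambda>x. (f x)\<^sup>2"])
    show "(\<lambda>x. 0::real) \<in> borel_measurable M" by simp
    show "(\<lambda>x. (f x - tr n f x)\<^sup>2) \<in> borel_measurable M" for n
      using tr_meas[OF fm, of n] fm by measurable
    show "integrable M (\<lambda>x. (f x)\<^sup>2)" by (rule f2)
    show "AE x in M. (\<lambda>n. (f x - tr n f x)\<^sup>2) \<longlonglongrightarrow> 0"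
      using f(2)
    proof eventually_elim
      case (elim x)
      have "(\<lambda>n. (f x - tr n f x)\<^sup>2) \<longlonglongrightarrow> (f x - f x)\<^sup>2"
        by (intro tendsto_intros tr_lim elim)
      then show ?case by simp
    qed
    show "AE x in M. norm ((f x - tr n f x)\<^sup>2) \<le> (f x)\<^sup>2" for n
    proof (rule AE_I2)
      fix x
      have "\<bar>f x - tr n f x\<bar>\<^sup>2 \<le> \<bar>f x\<bar>\<^sup>2" by (intro power_mono tr_diff) simp
      then show "norm ((f x - tr n f x)\<^sup>2) \<le> (f x)\<^sup>2" by simp
    qed
  qed
  then have "eventually (\<lambda>n. (\<integral>x. (f x - tr n f x)\<^sup>2 \<partial>M) < e) sequentially"
    using e by (intro order_tendstoD(2)) auto
  then obtain n where "(\<integral>x. (f x - tr n f x)\<^sup>2 \<partial>M) < e" by (auto simp: eventually_sequentially)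
  then show ?thesis using tr_Dset_L2[OF fm f2, of n] by blast
qed

lemma approx_L1:
  assumes f: "L1 M f" "AE x in M. 0 \<le> f x" and e: "0 < e"
  shows "\<exists>u\<in>Dset M. \<exists>A\<in>sets M. emeasure M A < \<infinity> \<and> (\<forall>x\<in>space M - A. u x = 0) \<and>
            (\<integral>x. \<bar>f x - u x\<bar> \<partial>M) < e"
proof -
  have fm: "f \<in> borel_measurable M" and fi: "integrable M f" using f by (auto simp: L1_def)
  have lim: "(\<lambda>n. \<integral>x. \<bar>f x - tr n f x\<bar> \<partial>M) \<longlonglongrightarrow> (\<integral>x. 0 \<partial>M)"
  proof (rule integral_dominated_convergence[where w="\<lambda>x. \<bar>f x\<bar>"])
    show "(\<lambda>x. 0::real) \<in> borel_measurable M" by simp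
    show "(\<lambda>x. \<bar>f x - tr n f x\<bar>) \<in> borel_measurable M" for n
      using tr_meas[OF fm, of n] fm by measurable
    show "integrable M (\<lambda>x. \<bar>f x\<bar>)" using fi by simp
    show "AE x in M. (\<lambda>n. \<bar>f x - tr n f x\<bar>) \<longlonglongrightarrow> 0"
      using f(2)
    proof eventually_elim
      case (elim x)
      have "(\<lambda>n. \<bar>f x - tr n f x\<bar>) \<longlonglongrightarrow> \<bar>f x - f x\<bar>"
        by (intro tendsto_intros tr_lim elim)
      then show ?case by simp
    qed
    show "AE x in M. norm (\<bar>f x - tr n f x\<bar>) \<le> \<bar>f x\<bar>" for n
      using tr_diff[of f _ n] by (intro AE_I2) simp
  qed
  then have "eventually (\<lambda>n. (\<integral>x. \<bar>f x - tr n f x\<bar> \<partial>M) < e) sequentially"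
    using e by (intro order_tendstoD(2)) auto
  then obtain n where n: "(\<integral>x. \<bar>f x - tr n f x\<bar> \<partial>M) < e" by (auto simp: eventually_sequentially)
  define A where "A = {y\<in>space M. 1 / real (Suc n) \<le> f y}"
  have As: "A \<in> sets M" unfolding A_def using fm by (intro borel_measurable_le measurable_const) auto
  have "integrable M (indicator A :: 'a \<Rightarrow> real)"
  proof (rule Bochner_Integration.integrable_bound[where f="\<lambda>x. real (Suc n) * f x"])
    show "integrable M (\<lambda>x. real (Suc n) * f x)" using fi by simp
    show "(indicator A :: 'a \<Rightarrow> real) \<in> borel_measurable M" using As by simp
    show "AE x in M. norm (indicator A x :: real) \<le> norm (real (Suc n) * f x)"
    proof (rule AE_I2)
      fix x assume "x \<in> space M"
      show "norm (indicator A x :: real) \<le> norm (real (Suc n) * f x)"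
      proof (cases "x \<in> A")
        case True
        then have "1 \<le> real (Suc n) * f x" by (simp add: A_def field_simps)
        then show ?thesis using True by simp
      qed simp
    qed
  qed
  then have "emeasure M A < \<infinity>" using As by (simp add: integrable_indicator_iff Int_absorb2 sets.sets_into_space)
  moreover have "\<forall>x\<in>space M - A. tr n f x = 0" by (auto simp: A_def tr_def)
  ultimately show ?thesis using tr_Dset_L1[OF fm fi, of n] n As by blast
qed




context setting begin

lemma subMarkov:
  assumes sym: "symmetric_semigroup_L2 M T" and u: "u \<in> Dset M" and s: "0 \<le> s"
  shows "(\<integral>\<^sup>+x. ennreal (ptf p s u x) \<partial>M) \<le> ennreal (\<integral>x. u x \<partial>M)"
proof -
  obtain A where A: "range A \<subseteq> sets M" "\<Union> (range A) = space M" "\<And>i. emeasure M (A i) \<noteq> \<infinity>" "incseq A"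
    using sigma_finite_incseq by blast
  obtain B where B: "B \<ge> 0" "\<forall>x\<in>space M. 0 \<le> u x \<and> u x \<le> B" using Dfacts(3)[OF u] by blast
  have um: "u \<in> borel_measurable M" and ui: "integrable M u" using Dfacts[OF u] by auto
  define P where "P = ptf p s u"
  have Pm: "P \<in> borel_measurable M" unfolding P_def using P_meas_s[OF um s] .
  have Pb: "0 \<le> P x \<and> P x \<le> B" if "x \<in> space M" for x
    unfolding P_def using ptf_bounds[where a=0 and b=B, OF um _ s that] B by auto
  have step: "(\<integral>\<^sup>+x. ennreal (P x) * indicator (A i) x \<partial>M) \<le> ennreal (\<integral>x. u x \<partial>M)" for i
  proof -
    have Ai: "A i \<in> sets M" "emeasure M (A i) < \<infinity>" using A(1) A(3)[of i] by (auto simp: less_top)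
    define phi :: "'a \<Rightarrow> real" where "phi = indicator (A i)"
    have phim: "phi \<in> borel_measurable M" using Ai by (simp add: phi_def)
    have phi2: "integrable M (\<lambda>x. (phi x)\<^sup>2)"
    proof -
      have "(\<lambda>x. (phi x)\<^sup>2) = phi" by (auto simp: phi_def indicator_def fun_eq_iff)
      then show ?thesis using Ai by (simp add: phi_def)
    qed
    have phibd: "bdd_meas M phi" using phim by (auto simp: bdd_meas_def phi_def intro!: exI[of _ 1])
    have phiL2: "L2 M phi" using phim phi2 by (simp add: L2_def)
    have Pphi_int: "integrable M (\<lambda>x. P x * phi x)"
    proof (rule Bochner_Integration.integrable_bound[where f="\<lambda>x. B * phi x"])
      show "integrable M (\<lambda>x. B * phi x)" using Ai by (simp add: phi_def)
      show "(\<lambda>x. P x * phi x) \<in> borel_measurable M" using Pm phim by simp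
      show "AE x in M. norm (P x * phi x) \<le> norm (B * phi x)"
        using Pb B(1) by (intro AE_I2) (auto simp: phi_def indicator_def)
    qed
    have "(\<integral>\<^sup>+x. ennreal (P x) * indicator (A i) x \<partial>M) = (\<integral>\<^sup>+x. ennreal (P x * phi x) \<partial>M)"
      by (intro nn_integral_cong) (auto simp: phi_def indicator_def)
    also have "\<dots> = ennreal (\<integral>x. P x * phi x \<partial>M)"
      using Pphi_int Pb by (intro nn_integral_eq_integral) (auto simp: phi_def indicator_def intro!: AE_I2)
    also have "(\<integral>x. P x * phi x \<partial>M) = (\<integral>x. T s u x * phi x \<partial>M)"
    proof (rule integral_cong_AE)
      show "(\<lambda>x. P x * phi x) \<in> borel_measurable M" using Pm phim by simp
      have "T s u \<in> borel_measurable M" using sgL2[OF s Dsq(2)[OF u]] by (simp add: L2_def)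
      then show "(\<lambda>x. T s u x * phi x) \<in> borel_measurable M" using phim by simp
      show "AE x in M. P x * phi x = T s u x * phi x" using P_AE[OF u s] by (auto simp: P_def)
    qed
    also have "\<dots> = (\<integral>x. u x * T s phi x \<partial>M)"
      using sym s Dsq(2)[OF u] phiL2 unfolding symmetric_semigroup_L2_def by blast
    also have "\<dots> = (\<integral>x. u x * ptf p s phi x \<partial>M)"
    proof (rule integral_cong_AE)
      have "T s phi \<in> borel_measurable M" using sgL2[OF s phiL2] by (simp add: L2_def)
      then show "(\<lambda>x. u x * T s phi x) \<in> borel_measurable M" using um by simp
      show "(\<lambda>x. u x * ptf p s phi x) \<in> borel_measurable M" using um P_meas_s[OF phim s] by simp
      show "AE x in M. u x * T s phi x = u x * ptf p s phi x" using rep[OF s phibd phi2] by auto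
    qed
    also have "\<dots> \<le> (\<integral>x. u x \<partial>M)"
    proof (rule integral_mono'[OF ui])
      fix x assume x: "x \<in> space M"
      have "0 \<le> ptf p s phi x \<and> ptf p s phi x \<le> 1"
        by (rule ptf_bounds[OF phim _ s x]) (auto simp: phi_def indicator_def)
      then show "u x * ptf p s phi x \<le> u x" using B(2) x by (simp add: mult_left_le)
      show "0 \<le> u x" using B(2) x by auto
    qed
    finally show ?thesis by (simp add: ennreal_leI)
  qed
  have "(\<integral>\<^sup>+x. ennreal (P x) \<partial>M) = (\<integral>\<^sup>+x. (SUP i. ennreal (P x) * indicator (A i) x) \<partial>M)"
  proof (rule nn_integral_cong)
    fix x assume x: "x \<in> space M"
    then obtain j where j: "x \<in> A j" using A(2) by auto
    show "ennreal (P x) = (SUP i. ennreal (P x) * indicator (A i) x)"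
    proof (rule antisym)
      show "ennreal (P x) \<le> (SUP i. ennreal (P x) * indicator (A i) x)"
        using j by (intro SUP_upper2[of j]) auto
      show "(SUP i. ennreal (P x) * indicator (A i) x) \<le> ennreal (P x)"
        by (intro SUP_least) (auto simp: indicator_def)
    qed
  qed
  also have "\<dots> = (SUP i. (\<integral>\<^sup>+x. ennreal (P x) * indicator (A i) x \<partial>M))"
  proof (rule nn_integral_monotone_convergence_SUP)
    show "incseq (\<lambda>i x. ennreal (P x) * indicator (A i) x)"
      using A(4) by (auto simp: incseq_def le_fun_def indicator_def intro!: mult_left_mono dest: monoD subsetD)
    show "(\<lambda>x. ennreal (P x) * indicator (A i) x) \<in> borel_measurable M" for i
      using Pm A(1) by auto
  qed
  also have "\<dots> \<le> ennreal (\<integral>x. u x \<partial>M)" by (intro SUP_least step)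
  finally show ?thesis by (simp add: P_def)
qed


lemma P_L1:
  assumes sym: "symmetric_semigroup_L2 M T" and u: "u \<in> Dset M" and s: "0 \<le> s"
  shows "integrable M (ptf p s u)" "(\<integral>x. ptf p s u x \<partial>M) \<le> (\<integral>x. u x \<partial>M)"
proof -
  obtain B where B: "B \<ge> 0" "\<forall>x\<in>space M. 0 \<le> u x \<and> u x \<le> B" using Dfacts(3)[OF u] by blast
  have um: "u \<in> borel_measurable M" and ui: "integrable M u" using Dfacts[OF u] by auto
  have Pm: "ptf p s u \<in> borel_measurable M" using P_meas_s[OF um s] .
  have Pb: "0 \<le> ptf p s u x" if "x \<in> space M" for x
    using ptf_bounds[where a=0 and b=B, OF um _ s that] B by auto
  have nn: "(\<integral>\<^sup>+x. ennreal (ptf p s u x) \<partial>M) \<le> ennreal (\<integral>x. u x \<partial>M)" by (rule subMarkov[OF sym u s])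
  show i: "integrable M (ptf p s u)"
    by (rule integrableI_nonneg) (use Pm Pb nn in \<open>auto intro!: AE_I2 simp: le_less_trans\<close>)
  have "ennreal (\<integral>x. ptf p s u x \<partial>M) = (\<integral>\<^sup>+x. ennreal (ptf p s u x) \<partial>M)"
    using i Pb by (intro nn_integral_eq_integral[symmetric]) (auto intro!: AE_I2)
  with nn have "ennreal (\<integral>x. ptf p s u x \<partial>M) \<le> ennreal (\<integral>x. u x \<partial>M)" by simp
  moreover have "0 \<le> (\<integral>x. u x \<partial>M)" using B by (intro Bochner_Integration.integral_nonneg) auto
  ultimately show "(\<integral>x. ptf p s u x \<partial>M) \<le> (\<integral>x. u x \<partial>M)" by (simp add: ennreal_le_iff)
qed

lemma L1mem:
  assumes sym: "symmetric_semigroup_L2 M T" and u: "u \<in> Dset M" and t: "0 < t"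
  shows "L1 M (\<lambda>x. (1 / t) * (\<integral>s\<in>{0..t}. ptf p s u x \<partial>lborel))"
proof -
  define g where "g = (\<lambda>x. (1 / t) * (\<integral>s\<in>{0..t}. ptf p s u x \<partial>lborel))"
  obtain B where B: "B \<ge> 0" "\<forall>x\<in>space M. 0 \<le> u x \<and> u x \<le> B" using Dfacts(3)[OF u] by blast
  have um: "u \<in> borel_measurable M" using Dfacts(1)[OF u] .
  have gm: "g \<in> borel_measurable M" unfolding g_def by (rule avg_meas[OF um])
  have gnn: "\<forall>x\<in>space M. 0 \<le> g x" using L2mem(2)[OF u t] by (simp add: g_def)
  have gQ: "g x = (1/t) * (LINT s:{0..t}|lborel. Q u s x)" for x
    by (simp add: g_def avg_Q)
  have u0: "0 \<le> (\<integral>x. u x \<partial>M)" using B by (intro Bochner_Integration.integral_nonneg) auto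
  have "(\<integral>\<^sup>+x. ennreal (g x) \<partial>M) \<le> ennreal (\<integral>x. u x \<partial>M)"
    unfolding gQ
  proof (rule avg_bound[where c=B])
    show "(\<lambda>(s, x). Q u s x) \<in> borel_measurable (lborel \<Otimes>\<^sub>M M)" by (rule Q_meas2[OF um])
    show "0 \<le> Q u s x \<and> Q u s x \<le> B" if "s \<in> {0..t}" "x \<in> space M" for s x
      using Q_bounds[OF u B(2) that] .
    show "0 < t" by (rule t)
    show "0 \<le> (\<integral>x. u x \<partial>M)" by (rule u0)
    fix s assume s: "s \<in> {0<..t}"
    have "(\<integral>\<^sup>+x. ennreal (Q u s x) \<partial>M) = (\<integral>\<^sup>+x. ennreal (ptf p s u x) \<partial>M)"
      using s by (simp add: Q_def)
    also have "\<dots> \<le> ennreal (\<integral>x. u x \<partial>M)" using subMarkov[OF sym u] s by simp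
    finally show "(\<integral>\<^sup>+x. ennreal (Q u s x) \<partial>M) \<le> ennreal (\<integral>x. u x \<partial>M)" .
  qed
  then have "integrable M g"
    by (intro integrableI_nonneg) (use gm gnn in \<open>auto intro!: AE_I2 simp: le_less_trans\<close>)
  then show ?thesis using gm by (simp add: L1_def g_def)
qed

end



lemma abs_le_quad:
  fixes h eta :: real
  assumes "0 < eta"
  shows "\<bar>h\<bar> \<le> eta + h\<^sup>2 / eta"
proof (cases "\<bar>h\<bar> \<le> eta")
  case True
  have "0 \<le> h\<^sup>2 / eta" using assms by simp
  then show ?thesis using True by linarith
next
  case False
  then have "eta * \<bar>h\<bar> \<le> \<bar>h\<bar> * \<bar>h\<bar>" using assms by (intro mult_right_mono) auto
  then have "\<bar>h\<bar> \<le> h\<^sup>2 / eta" using assms by (simp add: field_simps power2_eq_square abs_mult_self_eq mult.commute)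
  then show ?thesis using assms by linarith
qed

lemma aux_lin: "(b::real) \<le> e/8 \<Longrightarrow> a \<le> e/8 \<Longrightarrow> 2*(a+b) \<le> e/2"
  by (simp add: field_simps)

context setting begin

lemma L1est:
  assumes sym: "symmetric_semigroup_L2 M T" and u: "u \<in> Dset M"
    and A: "A \<in> sets M" "emeasure M A < \<infinity>" "\<forall>x\<in>space M - A. u x = 0"
    and s: "0 \<le> s" and eta: "0 < eta"
  shows "(\<integral>x. \<bar>u x - ptf p s u x\<bar> \<partial>M) \<le> 2 * (eta * measure M A + (1/eta) * (\<integral>x. (T s u x - u x)\<^sup>2 \<partial>M))"
proof -
  define P where "P = ptf p s u"
  define ind :: "'a \<Rightarrow> real" where "ind = indicator A"
  obtain B where B: "B \<ge> 0" "\<forall>x\<in>space M. 0 \<le> u x \<and> u x \<le> B" using Dfacts(3)[OF u] by blast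
  have um: "u \<in> borel_measurable M" and ui: "integrable M u" using Dfacts[OF u] by auto
  have Pi: "integrable M P" and PU: "(\<integral>x. P x \<partial>M) \<le> (\<integral>x. u x \<partial>M)"
    using P_L1[OF sym u s] by (auto simp: P_def)
  have Pb: "0 \<le> P x" if "x \<in> space M" for x
    using ptf_bounds[where a=0 and b=B, OF um _ s that] B by (auto simp: P_def)
  have hi: "integrable M (\<lambda>x. \<bar>u x - P x\<bar>)" using ui Pi by auto
  have hind: "integrable M (\<lambda>x. \<bar>u x - P x\<bar> * ind x)" unfolding ind_def
    by (rule integrable_real_mult_indicator[OF A(1) hi])
  have Pind: "integrable M (\<lambda>x. P x * ind x)" unfolding ind_def
    by (rule integrable_real_mult_indicator[OF A(1) Pi])
  have uind: "integrable M (\<lambda>x. u x * ind x)" unfolding ind_def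
    by (rule integrable_real_mult_indicator[OF A(1) ui])
  have indi: "integrable M ind" unfolding ind_def using A by simp
  have L: "L2 M u" "L2 M P" using Dsq(2)[OF u] P_L2[OF u s] by (auto simp: P_def)
  have h2: "integrable M (\<lambda>x. (u x - P x)\<^sup>2)" by (rule L2_diff_int[OF L])
  have "(\<integral>x. \<bar>u x - P x\<bar> \<partial>M) = (\<integral>x. \<bar>u x - P x\<bar> * ind x + (\<bar>u x - P x\<bar> - \<bar>u x - P x\<bar> * ind x) \<partial>M)"
    by simp
  also have "\<dots> = (\<integral>x. \<bar>u x - P x\<bar> * ind x \<partial>M) + (\<integral>x. \<bar>u x - P x\<bar> - \<bar>u x - P x\<bar> * ind x \<partial>M)"
    using hind hi by (intro Bochner_Integration.integral_add) auto
  also have "(\<integral>x. \<bar>u x - P x\<bar> - \<bar>u x - P x\<bar> * ind x \<partial>M) = (\<integral>x. P x - P x * ind x \<partial>M)"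
  proof (rule Bochner_Integration.integral_cong[OF refl])
    fix x assume x: "x \<in> space M"
    show "\<bar>u x - P x\<bar> - \<bar>u x - P x\<bar> * ind x = P x - P x * ind x"
    proof (cases "x \<in> A")
      case True then show ?thesis by (simp add: ind_def)
    next
      case False then show ?thesis using A(3) x Pb[OF x] by (simp add: ind_def)
    qed
  qed
  also have "\<dots> = (\<integral>x. P x \<partial>M) - (\<integral>x. P x * ind x \<partial>M)"
    using Pi Pind by (rule Bochner_Integration.integral_diff)
  also have "\<dots> \<le> (\<integral>x. u x * ind x \<partial>M) - (\<integral>x. P x * ind x \<partial>M)"
  proof -
    have "(\<integral>x. u x \<partial>M) = (\<integral>x. u x * ind x \<partial>M)"
    proof (rule Bochner_Integration.integral_cong[OF refl])
      fix x assume x: "x \<in> space M"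
      show "u x = u x * ind x" using A(3) x by (cases "x \<in> A") (auto simp: ind_def)
    qed
    then show ?thesis using PU by simp
  qed
  also have "\<dots> = (\<integral>x. (u x - P x) * ind x \<partial>M)"
    using uind Pind by (simp add: left_diff_distrib)
  also have "\<dots> \<le> (\<integral>x. \<bar>u x - P x\<bar> * ind x \<partial>M)"
    using uind Pind hind by (intro integral_mono) (auto simp: ind_def indicator_def left_diff_distrib)
  finally have 1: "(\<integral>x. \<bar>u x - P x\<bar> \<partial>M) \<le> 2 * (\<integral>x. \<bar>u x - P x\<bar> * ind x \<partial>M)" by simp
  have "(\<integral>x. \<bar>u x - P x\<bar> * ind x \<partial>M) \<le> (\<integral>x. eta * ind x + (1/eta) * (u x - P x)\<^sup>2 \<partial>M)"
  proof (rule integral_mono)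
    show "integrable M (\<lambda>x. eta * ind x + (1/eta) * (u x - P x)\<^sup>2)" using indi h2 by auto
    fix x assume x: "x \<in> space M"
    show "\<bar>u x - P x\<bar> * ind x \<le> eta * ind x + (1/eta) * (u x - P x)\<^sup>2"
    proof (cases "x \<in> A")
      case True
      then show ?thesis using abs_le_quad[OF eta, of "u x - P x"] by (simp add: ind_def)
    next
      case False
      then show ?thesis using eta by (simp add: ind_def)
    qed
  qed (rule hind)
  also have "\<dots> = eta * measure M A + (1/eta) * (\<integral>x. (u x - P x)\<^sup>2 \<partial>M)"
  proof -
    have "(\<integral>x. ind x \<partial>M) = measure M A"
      using A(1) by (simp add: ind_def Int_absorb2 sets.sets_into_space)
    then show ?thesis using indi h2 by simp
  qed
  also have "(\<integral>x. (u x - P x)\<^sup>2 \<partial>M) = (\<integral>x. (T s u x - u x)\<^sup>2 \<partial>M)"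
  proof (rule integral_cong_AE)
    show "(\<lambda>x. (u x - P x)\<^sup>2) \<in> borel_measurable M" using h2 by auto
    have "T s u \<in> borel_measurable M" using sgL2[OF s Dsq(2)[OF u]] by (simp add: L2_def)
    then show "(\<lambda>x. (T s u x - u x)\<^sup>2) \<in> borel_measurable M" using um by simp
    show "AE x in M. (u x - P x)\<^sup>2 = (T s u x - u x)\<^sup>2"
      using P_AE[OF u s] by eventually_elim (simp add: P_def power2_commute)
  qed
  finally show ?thesis using 1 by (simp add: P_def)
qed


lemma L1approx:
  assumes sym: "symmetric_semigroup_L2 M T" and u: "u \<in> Dset M"
    and A: "A \<in> sets M" "emeasure M A < \<infinity>" "\<forall>x\<in>space M - A. u x = 0"
    and e: "0 < e"
  shows "\<exists>d>0. \<forall>t. 0 < t \<longrightarrow> t < d \<longrightarrow>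
           (\<integral>x. \<bar>u x - (1 / t) * (\<integral>s\<in>{0..t}. ptf p s u x \<partial>lborel)\<bar> \<partial>M) < e"
proof -
  obtain B where B: "B \<ge> 0" "\<forall>x\<in>space M. 0 \<le> u x \<and> u x \<le> B" using Dfacts(3)[OF u] by blast
  have um: "u \<in> borel_measurable M" and ui: "integrable M u" using Dfacts[OF u] by auto
  define mA where "mA = measure M A"
  have mA0: "0 \<le> mA" by (simp add: mA_def)
  define eta where "eta = e / (8 * (mA + 1))"
  have eta: "0 < eta" using e mA0 by (simp add: eta_def)
  have etamA: "eta * mA \<le> e / 8"
  proof -
    have "mA / (mA + 1) \<le> 1" using mA0 by simp
    then have "e * (mA / (mA + 1)) \<le> e * 1" using e by (intro mult_left_mono) auto
    then show ?thesis using mA0 by (simp add: eta_def field_simps)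
  qed
  obtain d where d: "d > 0" "\<And>s. 0 < s \<Longrightarrow> s < d \<Longrightarrow> (\<integral>x. (T s u x - u x)\<^sup>2 \<partial>M) < eta * e / 8"
    using sgsmall[OF Dsq(2)[OF u], of "eta * e / 8"] e eta by auto
  have Ps: "(\<integral>x. \<bar>u x - ptf p s u x\<bar> \<partial>M) \<le> e / 2" if s: "0 < s" "s < d" for s
  proof -
    have a: "(\<integral>x. \<bar>u x - ptf p s u x\<bar> \<partial>M) \<le> 2 * (eta * mA + (1/eta) * (\<integral>x. (T s u x - u x)\<^sup>2 \<partial>M))"
      using L1est[OF sym u A _ eta, of s] s by (simp add: mA_def)
    have "(1/eta) * (\<integral>x. (T s u x - u x)\<^sup>2 \<partial>M) \<le> (1/eta) * (eta * e / 8)"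
      using d(2)[OF s] eta by (intro mult_left_mono) auto
    also have "(1/eta) * (eta * e / 8) = e / 8" using eta by simp
    finally have b: "(1/eta) * (\<integral>x. (T s u x - u x)\<^sup>2 \<partial>M) \<le> e / 8" .
    have c: "2 * (eta * mA + (1/eta) * (\<integral>x. (T s u x - u x)\<^sup>2 \<partial>M)) \<le> e / 2"
      using b etamA by (metis aux_lin)
    show ?thesis by (rule order_trans[OF a c])
  qed
  show ?thesis
  proof (intro exI[of _ d] conjI allI impI)
    show "0 < d" by (rule d(1))
    fix t :: real assume t: "0 < t" "t < d"
    define g where "g = (\<lambda>x. (1 / t) * (\<integral>s\<in>{0..t}. ptf p s u x \<partial>lborel))"
    have gQ: "g x = (1/t) * (LINT s:{0..t}|lborel. Q u s x)" for x
      by (simp add: g_def avg_Q)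
    have ugQ: "u x - g x = (1/t) * (LINT s:{0..t}|lborel. u x - Q u s x)" if x: "x \<in> space M" for x
      unfolding gQ
      by (rule mean_const_diff[OF Qs_meas[OF um x] _ t(1), where c=B, symmetric])
         (use Q_bounds[OF u B(2) _ x] in force)
    have pw: "\<bar>u x - g x\<bar> \<le> (1/t) * (LINT s:{0..t}|lborel. \<bar>u x - Q u s x\<bar>)" if x: "x \<in> space M" for x
      unfolding ugQ[OF x] by (rule mean_abs[OF t(1)])
    have gL: "L1 M g" using L1mem[OF sym u t(1)] by (simp add: g_def)
    have int: "integrable M (\<lambda>x. \<bar>u x - g x\<bar>)" using ui gL by (auto simp: L1_def)
    have "ennreal (\<integral>x. \<bar>u x - g x\<bar> \<partial>M) = (\<integral>\<^sup>+x. ennreal (\<bar>u x - g x\<bar>) \<partial>M)"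
      using int by (intro nn_integral_eq_integral[symmetric]) auto
    also have "\<dots> \<le> (\<integral>\<^sup>+x. ennreal ((1/t) * (LINT s:{0..t}|lborel. \<bar>u x - Q u s x\<bar>)) \<partial>M)"
      using pw by (intro nn_integral_mono) (simp add: ennreal_leI)
    also have "\<dots> \<le> ennreal (e/2)"
    proof (rule avg_bound[where c="B"])
      show "(\<lambda>(s, x). \<bar>u x - Q u s x\<bar>) \<in> borel_measurable (lborel \<Otimes>\<^sub>M M)"
        using borel_measurable_abs[OF borel_measurable_diff[OF um2[OF um] Qm[OF um]]]
        by (simp add: case_prod_beta)
      show "0 \<le> \<bar>u x - Q u s x\<bar> \<and> \<bar>u x - Q u s x\<bar> \<le> B" if "s \<in> {0..t}" "x \<in> space M" for s x
        using Q_bounds[OF u B(2) that] B(2) that by auto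
      show "0 < t" by (rule t)
      show "0 \<le> e/2" using e by simp
      fix s assume s: "s \<in> {0<..t}"
      have i2: "integrable M (\<lambda>x. \<bar>u x - ptf p s u x\<bar>)" using ui P_L1(1)[OF sym u, of s] s by auto
      have "(\<integral>\<^sup>+x. ennreal (\<bar>u x - Q u s x\<bar>) \<partial>M) = (\<integral>\<^sup>+x. ennreal (\<bar>u x - ptf p s u x\<bar>) \<partial>M)"
        using s by (simp add: Q_def)
      also have "\<dots> = ennreal (\<integral>x. \<bar>u x - ptf p s u x\<bar> \<partial>M)"
        using i2 by (intro nn_integral_eq_integral) auto
      also have "\<dots> \<le> ennreal (e/2)" using Ps[of s] s t by (intro ennreal_leI) auto
      finally show "(\<integral>\<^sup>+x. ennreal (\<bar>u x - Q u s x\<bar>) \<partial>M) \<le> ennreal (e/2)" .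
    qed
    finally have "(\<integral>x. \<bar>u x - g x\<bar> \<partial>M) \<le> e/2" using e by (simp add: ennreal_le_iff)
    then show "(\<integral>x. \<bar>u x - (1 / t) * (\<integral>s\<in>{0..t}. ptf p s u x \<partial>lborel)\<bar> \<partial>M) < e"
      using e by (simp add: g_def)
  qed
qed

end



theorem lemma2p3:
  fixes M :: "'a measure"
    and p :: "real \<Rightarrow> 'a \<Rightarrow> 'a measure"
    and T :: "real \<Rightarrow> ('a \<Rightarrow> real) \<Rightarrow> ('a \<Rightarrow> real)"
  assumes "sigma_finite_measure M"
    and "transition_prob M p"
    and "strongly_cont_semigroup_L2 M T"
    and "\<And>t f. 0 \<le> t \<Longrightarrow> bdd_meas M f \<Longrightarrow> integrable M (\<lambda>x. (f x)\<^sup>2) \<Longrightarrow>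
            AE x in M. ptf p t f x = T t f x"
  shows "(\<forall>g\<in>D0set M p. L2 M g \<and> (AE x in M. 0 \<le> g x)) \<and>
         (\<forall>f. L2 M f \<longrightarrow> (AE x in M. 0 \<le> f x) \<longrightarrow>
            (\<forall>e>0. \<exists>g\<in>D0set M p. (\<integral>x. (f x - g x)\<^sup>2 \<partial>M) < e)) \<and>
         (symmetric_semigroup_L2 M T \<longrightarrow>
         (\<forall>g\<in>D0set M p. L1 M g \<and> (AE x in M. 0 \<le> g x)) \<and>
         (\<forall>f. L1 M f \<longrightarrow> (AE x in M. 0 \<le> f x) \<longrightarrow>
            (\<forall>e>0. \<exists>g\<in>D0set M p. (\<integral>x. \<bar>f x - g x\<bar> \<partial>M) < e)))"
proof -
  have "setting M p T"
    unfolding setting_def setting_axioms_def using assms by blast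
  then interpret S: setting M p T .
  have P1: "\<forall>g\<in>D0set M p. L2 M g \<and> (AE x in M. 0 \<le> g x)"
  proof
    fix g assume "g \<in> D0set M p"
    then obtain u t where g: "g = (\<lambda>x. (1 / t) * (\<integral>s\<in>{0..t}. ptf p s u x \<partial>lborel))" and u: "u \<in> Dset M" and t: "0 < t"
      unfolding D0set_def by blast
    show "L2 M g \<and> (AE x in M. 0 \<le> g x)"
      using S.L2mem[OF u t] g by (auto intro!: AE_I2)
  qed
  have P2: "\<forall>f. L2 M f \<longrightarrow> (AE x in M. 0 \<le> f x) \<longrightarrow>
            (\<forall>e>0. \<exists>g\<in>D0set M p. (\<integral>x. (f x - g x)\<^sup>2 \<partial>M) < e)"
  proof (intro allI impI)
    fix f :: "'a \<Rightarrow> real" and e :: real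
    assume f: "L2 M f" "AE x in M. 0 \<le> f x" and e: "0 < e"
    obtain u where u: "u \<in> Dset M" and fu: "(\<integral>x. (f x - u x)\<^sup>2 \<partial>M) < e/4"
      using approx_L2[OF f, of "e/4"] e by auto
    obtain d where d: "d > 0" "\<And>t. 0 < t \<Longrightarrow> t < d \<Longrightarrow>
           (\<integral>x. (u x - (1 / t) * (\<integral>s\<in>{0..t}. ptf p s u x \<partial>lborel))\<^sup>2 \<partial>M) < e/4"
      using S.L2approx[OF u, of "e/4"] e by auto
    define t where "t = d / 2"
    have t: "0 < t" "t < d" using d by (auto simp: t_def)
    define g where "g = (\<lambda>x. (1 / t) * (\<integral>s\<in>{0..t}. ptf p s u x \<partial>lborel))"
    have gD: "g \<in> D0set M p" unfolding D0set_def g_def using u t by blast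
    have ug: "(\<integral>x. (u x - g x)\<^sup>2 \<partial>M) < e/4" using d(2)[OF t] by (simp add: g_def)
    have Lu: "L2 M u" using S.Dsq(2)[OF u] .
    have Lg: "L2 M g" using S.L2mem(1)[OF u t(1)] by (simp add: g_def)
    have "(\<integral>x. (f x - g x)\<^sup>2 \<partial>M) \<le> (\<integral>x. 2 * (f x - u x)\<^sup>2 + 2 * (u x - g x)\<^sup>2 \<partial>M)"
    proof (rule integral_mono)
      show "integrable M (\<lambda>x. (f x - g x)\<^sup>2)" by (rule L2_diff_int[OF f(1) Lg])
      show "integrable M (\<lambda>x. 2 * (f x - u x)\<^sup>2 + 2 * (u x - g x)\<^sup>2)"
        using L2_diff_int[OF f(1) Lu] L2_diff_int[OF Lu Lg] by auto
      fix x
      show "(f x - g x)\<^sup>2 \<le> 2 * (f x - u x)\<^sup>2 + 2 * (u x - g x)\<^sup>2"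
        using sq_diff_le[of "f x - u x" "g x - u x"] by (simp add: power2_commute)
    qed
    also have "\<dots> = 2 * (\<integral>x. (f x - u x)\<^sup>2 \<partial>M) + 2 * (\<integral>x. (u x - g x)\<^sup>2 \<partial>M)"
      using L2_diff_int[OF f(1) Lu] L2_diff_int[OF Lu Lg] by simp
    also have "\<dots> < e" using fu ug by simp
    finally show "\<exists>g\<in>D0set M p. (\<integral>x. (f x - g x)\<^sup>2 \<partial>M) < e" using gD by blast
  qed
  have P3: "symmetric_semigroup_L2 M T \<longrightarrow>
         (\<forall>g\<in>D0set M p. L1 M g \<and> (AE x in M. 0 \<le> g x)) \<and>
         (\<forall>f. L1 M f \<longrightarrow> (AE x in M. 0 \<le> f x) \<longrightarrow>
            (\<forall>e>0. \<exists>g\<in>D0set M p. (\<integral>x. \<bar>f x - g x\<bar> \<partial>M) < e))"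
  proof (intro impI conjI)
    assume sym: "symmetric_semigroup_L2 M T"
    show "\<forall>g\<in>D0set M p. L1 M g \<and> (AE x in M. 0 \<le> g x)"
    proof
      fix g assume "g \<in> D0set M p"
      then obtain u t where g: "g = (\<lambda>x. (1 / t) * (\<integral>s\<in>{0..t}. ptf p s u x \<partial>lborel))" and u: "u \<in> Dset M" and t: "0 < t"
        unfolding D0set_def by blast
      show "L1 M g \<and> (AE x in M. 0 \<le> g x)"
        using S.L1mem[OF sym u t] S.L2mem(2)[OF u t] g by (auto intro!: AE_I2)
    qed
    show "\<forall>f. L1 M f \<longrightarrow> (AE x in M. 0 \<le> f x) \<longrightarrow>
            (\<forall>e>0. \<exists>g\<in>D0set M p. (\<integral>x. \<bar>f x - g x\<bar> \<partial>M) < e)"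
    proof (intro allI impI)
      fix f :: "'a \<Rightarrow> real" and e :: real
      assume f: "L1 M f" "AE x in M. 0 \<le> f x" and e: "0 < e"
      obtain u A where u: "u \<in> Dset M" and A: "A \<in> sets M" "emeasure M A < \<infinity>" "\<forall>x\<in>space M - A. u x = 0"
        and fu: "(\<integral>x. \<bar>f x - u x\<bar> \<partial>M) < e/2"
        using approx_L1[OF f, of "e/2"] e by auto
      obtain d where d: "d > 0" "\<And>t. 0 < t \<Longrightarrow> t < d \<Longrightarrow>
           (\<integral>x. \<bar>u x - (1 / t) * (\<integral>s\<in>{0..t}. ptf p s u x \<partial>lborel)\<bar> \<partial>M) < e/2"
        using S.L1approx[OF sym u A, of "e/2"] e by auto
      define t where "t = d / 2"
      have t: "0 < t" "t < d" using d by (auto simp: t_def)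
      define g where "g = (\<lambda>x. (1 / t) * (\<integral>s\<in>{0..t}. ptf p s u x \<partial>lborel))"
      have gD: "g \<in> D0set M p" unfolding D0set_def g_def using u t by blast
      have ug: "(\<integral>x. \<bar>u x - g x\<bar> \<partial>M) < e/2" using d(2)[OF t] by (simp add: g_def)
      have ui: "integrable M u" using S.Dfacts(2)[OF u] .
      have gi: "integrable M g" using S.L1mem[OF sym u t(1)] by (simp add: g_def L1_def)
      have fi: "integrable M f" using f(1) by (simp add: L1_def)
      have "(\<integral>x. \<bar>f x - g x\<bar> \<partial>M) \<le> (\<integral>x. \<bar>f x - u x\<bar> + \<bar>u x - g x\<bar> \<partial>M)"
        using fi ui gi by (intro integral_mono) auto
      also have "\<dots> = (\<integral>x. \<bar>f x - u x\<bar> \<partial>M) + (\<integral>x. \<bar>u x - g x\<bar> \<partial>M)"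
        using fi ui gi by (intro Bochner_Integration.integral_add) auto
      also have "\<dots> < e" using fu ug by simp
      finally show "\<exists>g\<in>D0set M p. (\<integral>x. \<bar>f x - g x\<bar> \<partial>M) < e" using gD by blast
    qed
  qed
  show ?thesis using P1 P2 P3 by blast
qed


end
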